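(* Let $A_n=1$ if $n=2^{k+1}-2$ for some integer $k\ge0$ and $A_n=0$ otherwise, let $D(n)=\det\left(A_{i+j}\right)_{i,j=0}^{n-1}$ for $n\ge1$, $D(0)=1$ (so $D(n)\in\{1,-1\}$), and let $T_n=D(n)D(n+2)$ for $n\ge0$. Then: (i) for every $k\ge2$ and every $n$ with $2^k\le n\le 2^{k+1}-3$, $T_n=T_{2^{k+1}-3-n}$; (ii) $T_{4n}=(-1)^n$ for all $n\ge0$; (iii) $T_{2^{k+1}n+2^k-2}=(-1)^{n+1}$ for all $n\ge0$ and all $k\ge2$.
   Context: Also $T_0=1$ and $T_1=-1$. *)

theory Defs
  imports "HOL-Combinatorics.Permutations"
begin

definition A :: "nat \<Rightarrow> int" where
  "A n = (if \<exists>k::nat. n = 2^(k+1) - 2 then 1 else 0)"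

definition D :: "nat \<Rightarrow> int" where
  "D n = (\<Sum>p | p permutes {..<n}. sign p * (\<Prod>i<n. A (i + p i)))"

definition T :: "nat \<Rightarrow> int" where
  "T n = D n * D (n + 2)"

end

theory Submission
  imports Defs "Jordan_Normal_Form.Determinant"
begin


definition HM :: "(nat \<Rightarrow> int) \<Rightarrow> nat \<Rightarrow> int mat" where
  "HM f n = mat n n (\<lambda>(i,j). f (i+j))"

lemma D_det: "D n = det (HM A n)"
  unfolding D_def det_def HM_def
  by (auto simp: atLeast0LessThan intro!: sum.cong prod.cong)

lemma det_conj:
  fixes M :: "int mat" assumes M: "M \<in> carrier_mat n n" and p: "p permutes {0..<n}"
  shows "det (mat n n (\<lambda>(i,j). M $$ (p i, p j))) = det M"
proof -
  let ?R = "mat n n (\<lambda>(i,j). M $$ (p i, j))"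
  have R: "?R \<in> carrier_mat n n" by simp
  have 1: "det ?R = sign p * det M" using det_permute_rows[OF M p] by simp
  have "det (mat n n (\<lambda>(i,j). M $$ (p i, p j))) = det (transpose_mat (mat n n (\<lambda>(i,j). M $$ (p i, p j))))"
    by (subst det_transpose) auto
  also have "transpose_mat (mat n n (\<lambda>(i,j). M $$ (p i, p j))) = mat n n (\<lambda>(i,j). (transpose_mat ?R) $$ (p i, j))"
    using p by (intro eq_matI) (auto simp: permutes_in_image)
  also have "det \<dots> = sign p * det (transpose_mat ?R)"
    using det_permute_rows[OF _ p, of "transpose_mat ?R"] by simp
  also have "\<dots> = sign p * det ?R" by (subst det_transpose) auto
  finally show ?thesis using 1 by simp
qed



lemma A_odd: "A (2*m+1) = 0"
proof -
  have "2*m+1 \<noteq> 2^(k+1) - 2" for k :: nat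
  proof -
    have "(2::nat)^(k+1) - 2 = 2*(2^k - 1)" by (simp add: right_diff_distrib')
    thus ?thesis by presburger
  qed
  thus ?thesis unfolding A_def by auto
qed

lemma A_shift: "A (2*m+2) = A m"
proof -
  have "(\<exists>k::nat. 2*m+2 = 2^(k+1) - 2) \<longleftrightarrow> (\<exists>k::nat. m = 2^(k+1) - 2)"
  proof
    assume "\<exists>k::nat. 2*m+2 = 2^(k+1) - 2"
    then obtain k where k: "2*m+2 = 2^(k+1) - 2" by blast
    have "k \<noteq> 0" using k by (cases k) auto
    then obtain j where j: "k = Suc j" by (cases k) auto
    have "(2::nat)^(k+1) = 4 * 2^j" using j by simp
    hence "m = 2^(j+1) - 2" using k by simp
    thus "\<exists>k::nat. m = 2^(k+1) - 2" by blast
  next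
    assume "\<exists>k::nat. m = 2^(k+1) - 2"
    then obtain k where k: "m = 2^(k+1) - 2" by blast
    define t where "t = (2::nat)^k"
    have h: "t \<ge> 1" unfolding t_def by simp
    have e1: "(2::nat)^(k+1) = 2*t" "(2::nat)^(k+2) = 4*t" unfolding t_def by simp_all
    have "2*m+2 = 2^(k+2) - 2" using k h unfolding e1 by linarith
    thus "\<exists>k::nat. 2*m+2 = 2^(k+1) - 2" by (metis add_Suc_right one_add_one add.assoc)
  qed
  thus ?thesis unfolding A_def by simp
qed

lemma A_four: "A (4*m) = (if m = 0 then 1 else 0)"
proof (cases "m = 0")
  case True
  have "\<exists>k::nat. 4*m = 2^(k+1) - 2" using True by (intro exI[of _ 0]) simp
  thus ?thesis using True unfolding A_def by simp
next
  case False
  have "4*m \<noteq> 2^(k+1) - 2" for k :: nat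
  proof (cases k)
    case 0 thus ?thesis using False by simp
  next
    case (Suc j)
    have "(2::nat)^(k+1) = 4 * 2^j" using Suc by simp
    moreover have "(2::nat)^j \<ge> 1" by simp
    ultimately show ?thesis by presburger
  qed
  thus ?thesis using False unfolding A_def by auto
qed



definition sg :: "nat \<Rightarrow> nat \<Rightarrow> nat" where
  "sg n i = (if i < n then (if i < n - n div 2 then 2*i else 2*(i - (n - n div 2)) + 1) else i)"

lemma sg_permutes: "sg n permutes {0..<n}"
proof -
  let ?c = "n - n div 2"
  have inj: "inj_on (sg n) {0..<n}"
  proof (rule inj_onI)
    fix x y assume x: "x \<in> {0..<n}" and y: "y \<in> {0..<n}" and e: "sg n x = sg n y"
    show "x = y" using x y e unfolding sg_def by (auto split: if_splits) presburger+
  qed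
  have sub: "sg n ` {0..<n} \<subseteq> {0..<n}"
    unfolding sg_def by auto
  have "sg n ` {0..<n} = {0..<n}" by (rule endo_inj_surj[OF _ sub inj]) simp
  hence "bij_betw (sg n) {0..<n} {0..<n}" using inj by (simp add: bij_betw_def)
  moreover have "\<forall>x. x \<notin> {0..<n} \<longrightarrow> sg n x = x" unfolding sg_def by auto
  ultimately show ?thesis by (intro bij_imp_permutes) auto
qed

lemma det_split:
  fixes g :: "nat \<Rightarrow> nat \<Rightarrow> int" and n :: nat
  defines "c \<equiv> n - n div 2" and "h \<equiv> n div 2"
  shows "det (mat n n (\<lambda>(i,j). g i j)) =
    det (four_block_mat (mat c c (\<lambda>(a,b). g (2*a) (2*b))) (mat c h (\<lambda>(a,b). g (2*a) (2*b+1)))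
                        (mat h c (\<lambda>(a,b). g (2*a+1) (2*b))) (mat h h (\<lambda>(a,b). g (2*a+1) (2*b+1))))"
proof -
  have n: "n = c + h" unfolding c_def h_def by simp
  have "det (mat n n (\<lambda>(i,j). g i j)) = det (mat n n (\<lambda>(i,j). (mat n n (\<lambda>(i,j). g i j)) $$ (sg n i, sg n j)))"
    by (rule det_conj[symmetric, OF _ sg_permutes]) simp
  also have "mat n n (\<lambda>(i,j). (mat n n (\<lambda>(i,j). g i j)) $$ (sg n i, sg n j)) =
     four_block_mat (mat c c (\<lambda>(a,b). g (2*a) (2*b))) (mat c h (\<lambda>(a,b). g (2*a) (2*b+1)))
                        (mat h c (\<lambda>(a,b). g (2*a+1) (2*b))) (mat h h (\<lambda>(a,b). g (2*a+1) (2*b+1)))"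
  proof (rule eq_matI)
    fix i j assume i: "i < dim_row (four_block_mat (mat c c (\<lambda>(a,b). g (2*a) (2*b))) (mat c h (\<lambda>(a,b). g (2*a) (2*b+1)))
                        (mat h c (\<lambda>(a,b). g (2*a+1) (2*b))) (mat h h (\<lambda>(a,b). g (2*a+1) (2*b+1))))"
       and j: "j < dim_col (four_block_mat (mat c c (\<lambda>(a,b). g (2*a) (2*b))) (mat c h (\<lambda>(a,b). g (2*a) (2*b+1)))
                        (mat h c (\<lambda>(a,b). g (2*a+1) (2*b))) (mat h h (\<lambda>(a,b). g (2*a+1) (2*b+1))))"
    hence i': "i < n" and j': "j < n" using n by auto
    have si: "sg n i < n" "sg n j < n" using sg_permutes i' j' by (simp_all add: permutes_in_image)
    have sgi: "sg n i = (if i < c then 2*i else 2*(i-c)+1)" using i' by (simp add: sg_def c_def)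
    have sgj: "sg n j = (if j < c then 2*j else 2*(j-c)+1)" using j' by (simp add: sg_def c_def)
    show "mat n n (\<lambda>(i,j). (mat n n (\<lambda>(i,j). g i j)) $$ (sg n i, sg n j)) $$ (i, j) =
          four_block_mat (mat c c (\<lambda>(a,b). g (2*a) (2*b))) (mat c h (\<lambda>(a,b). g (2*a) (2*b+1)))
                        (mat h c (\<lambda>(a,b). g (2*a+1) (2*b))) (mat h h (\<lambda>(a,b). g (2*a+1) (2*b+1))) $$ (i, j)"
      using i j i' j' si by (cases "i < c"; cases "j < c"; simp add: sgi sgj)
  qed (use n in auto)
  finally show ?thesis .
qed



definition B :: "nat \<Rightarrow> int" where "B m = A (2*m)"
definition E :: "nat \<Rightarrow> int" where "E m = det (HM B m)"

lemma A_odd': "odd x \<Longrightarrow> A x = 0"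
  by (metis A_odd oddE)

lemma B_Suc: "B (Suc m) = A m"
  unfolding B_def using A_shift[of m] by (simp add: algebra_simps)

lemma B_even: "even x \<Longrightarrow> B x = (if x = 0 then 1 else 0)"
  unfolding B_def by (metis A_four evenE mult.assoc mult_2 numeral_Bit0 numeral_One one_add_one mult_zero_right)

lemma B_odd: "odd x \<Longrightarrow> B x = B (x div 2)"
proof -
  assume "odd x"
  then obtain m where m: "x = 2*m+1" by (metis oddE)
  have "A (2*x) = A (2*(2*m)+2)" using m by simp
  also have "\<dots> = A (2*m)" by (rule A_shift)
  finally show ?thesis unfolding B_def using m by simp
qed

lemma D_rec: "D n = E (n - n div 2) * D (n div 2)"
proof -
  let ?c = "n - n div 2" and ?h = "n div 2"
  have "D n = det (mat n n (\<lambda>(i,j). A (i+j)))" unfolding D_det HM_def ..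
  also have "\<dots> = det (four_block_mat (mat ?c ?c (\<lambda>(a,b). A (2*a + 2*b))) (mat ?c ?h (\<lambda>(a,b). A (2*a + (2*b+1))))
                        (mat ?h ?c (\<lambda>(a,b). A (2*a+1 + 2*b))) (mat ?h ?h (\<lambda>(a,b). A (2*a+1 + (2*b+1)))))"
    using det_split[where g="\<lambda>i j. A (i+j)" and n=n] by simp
  also have "mat ?c ?c (\<lambda>(a,b). A (2*a + 2*b)) = HM B ?c"
    unfolding HM_def B_def by (intro eq_matI) (auto simp: algebra_simps)
  also have "mat ?c ?h (\<lambda>(a,b). A (2*a + (2*b+1))) = 0\<^sub>m ?c ?h"
    by (intro eq_matI) (auto intro!: A_odd')
  also have "mat ?h ?c (\<lambda>(a,b). A (2*a+1 + 2*b)) = 0\<^sub>m ?h ?c"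
    by (intro eq_matI) (auto intro!: A_odd')
  also have "mat ?h ?h (\<lambda>(a,b). A (2*a+1 + (2*b+1))) = HM A ?h"
  proof -
    have "A (2*a+1 + (2*b+1)) = A (a+b)" for a b
      using A_shift[of "a+b"] by (simp add: algebra_simps)
    thus ?thesis unfolding HM_def by (intro eq_matI) auto
  qed
  also have "det (four_block_mat (HM B ?c) (0\<^sub>m ?c ?h) (0\<^sub>m ?h ?c) (HM A ?h)) = det (HM B ?c) * det (HM A ?h)"
    by (rule det_four_block_mat_lower_left_zero) (auto simp: HM_def)
  finally show ?thesis unfolding E_def D_det .
qed



lemma B_4: "B (2*a + 2*b) = (if a = 0 \<and> b = 0 then 1 else 0)"
  using B_even[of "2*a+2*b"] by auto

lemma B_41: "B (2*a + (2*b+1)) = B (a+b)"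
  using B_odd[of "2*a+(2*b+1)"] by simp

lemma B_41': "B (Suc (2*a + 2*b)) = B (a+b)"
  using B_41[of a b] by simp

lemma B_11': "B (Suc (Suc (2*a + 2*b))) = 0"
  using B_even[of "Suc (Suc (2*a+2*b))"] by simp

lemma B_14: "B (2*a + 1 + 2*b) = B (a+b)"
  using B_odd[of "2*a+1+2*b"] by simp

lemma B_11: "B (2*a + 1 + (2*b+1)) = 0"
  using B_even[of "2*a+1+(2*b+1)"] by simp

lemma E_split: "E n = det (four_block_mat (mat (n - n div 2) (n - n div 2) (\<lambda>(a,b). if a = 0 \<and> b = 0 then 1 else 0))
     (mat (n - n div 2) (n div 2) (\<lambda>(a,b). B (a+b)))
     (mat (n div 2) (n - n div 2) (\<lambda>(a,b). B (a+b))) (0\<^sub>m (n div 2) (n div 2)))"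
proof -
  let ?c = "n - n div 2" and ?h = "n div 2"
  have "E n = det (mat n n (\<lambda>(i,j). B (i+j)))" unfolding E_def HM_def ..
  also have "\<dots> = det (four_block_mat (mat ?c ?c (\<lambda>(a,b). B (2*a + 2*b))) (mat ?c ?h (\<lambda>(a,b). B (2*a + (2*b+1))))
                        (mat ?h ?c (\<lambda>(a,b). B (2*a+1 + 2*b))) (mat ?h ?h (\<lambda>(a,b). B (2*a+1 + (2*b+1)))))"
    using det_split[where g="\<lambda>i j. B (i+j)" and n=n] by simp
  also have "mat ?c ?c (\<lambda>(a,b). B (2*a + 2*b)) = mat ?c ?c (\<lambda>(a,b). if a = 0 \<and> b = 0 then 1 else 0)"
    by (intro eq_matI) (auto simp: B_4)
  also have "mat ?c ?h (\<lambda>(a,b). B (2*a + (2*b+1))) = mat ?c ?h (\<lambda>(a,b). B (a+b))"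
    by (intro eq_matI) (auto simp: B_41 B_41')
  also have "mat ?h ?c (\<lambda>(a,b). B (2*a + 1 + 2*b)) = mat ?h ?c (\<lambda>(a,b). B (a+b))"
    by (intro eq_matI) (auto simp: B_14 B_41')
  also have "mat ?h ?h (\<lambda>(a,b). B (2*a + 1 + (2*b+1))) = 0\<^sub>m ?h ?h"
    by (intro eq_matI) (auto simp: B_11 B_11')
  finally show ?thesis .
qed

lemma E_even: "E (2*h) = (-1)^(h*h) * E h * E h"
proof -
  let ?P = "mat h h (\<lambda>(a,b). if a = 0 \<and> b = 0 then 1 else (0::int))"
  let ?X = "mat h h (\<lambda>(a,b). B (a+b))"
  let ?M = "four_block_mat ?P ?X ?X (0\<^sub>m h h)"
  have "E (2*h) = det ?M" using E_split[of "2*h"] by simp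
  also have "\<dots> = (-1)^(h*h) * det (mat (h+h) (h+h) (\<lambda>(i,j). ?M $$ (i, if j < h then j + h else j - h)))"
    by (rule det_swap_cols) auto
  also have "mat (h+h) (h+h) (\<lambda>(i,j). ?M $$ (i, if j < h then j + h else j - h)) = four_block_mat ?X ?P (0\<^sub>m h h) ?X"
    by (intro eq_matI) auto
  also have "det (four_block_mat ?X ?P (0\<^sub>m h h) ?X) = det ?X * det ?X"
    by (rule det_four_block_mat_lower_left_zero) auto
  finally show ?thesis unfolding E_def HM_def by simp
qed

lemma E_odd: "E (2*h+1) = (-1)^(h*h) * D h * D h"
proof -
  let ?P = "mat (h+1) (h+1) (\<lambda>(a,b). if a = 0 \<and> b = 0 then 1 else (0::int))"
  let ?X = "mat (h+1) h (\<lambda>(a,b). B (a+b))"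
  let ?Y = "mat h (h+1) (\<lambda>(a,b). B (a+b))"
  let ?M = "four_block_mat ?P ?X ?Y (0\<^sub>m h h)"
  let ?Q = "four_block_mat (mat 1 1 (\<lambda>_. 1)) (mat 1 h (\<lambda>(a,b). B b)) (0\<^sub>m h 1) (HM A h)"
  let ?R = "mat h (h+1) (\<lambda>(b,j). if j = 0 then B b else 0)"
  have "E (2*h+1) = det ?M" using E_split[of "2*h+1"] by simp
  also have "\<dots> = (-1)^(h*h) * det (mat (1+h+h) (1+h+h) (\<lambda>(i,j). ?M $$ (i, if j < 1 then j else if j < 1 + h then j + h else j - h)))"
    by (rule det_swap_final_cols) auto
  also have "mat (1+h+h) (1+h+h) (\<lambda>(i,j). ?M $$ (i, if j < 1 then j else if j < 1 + h then j + h else j - h))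
     = four_block_mat ?Q (0\<^sub>m (h+1) h) ?R (HM A h)"
  proof (intro eq_matI)
    fix i j assume i: "i < dim_row (four_block_mat ?Q (0\<^sub>m (h+1) h) ?R (HM A h))"
      and j: "j < dim_col (four_block_mat ?Q (0\<^sub>m (h+1) h) ?R (HM A h))"
    hence i': "i < 1+h+h" and j': "j < 1+h+h" by (auto simp: HM_def)
    show "mat (1+h+h) (1+h+h) (\<lambda>(i,j). ?M $$ (i, if j < 1 then j else if j < 1 + h then j + h else j - h)) $$ (i,j)
      = four_block_mat ?Q (0\<^sub>m (h+1) h) ?R (HM A h) $$ (i,j)"
      using i' j' by (auto simp: HM_def B_Suc[symmetric] Suc_diff_le Suc_diff_Suc)
  qed (auto simp: HM_def)
  also have "det (four_block_mat ?Q (0\<^sub>m (h+1) h) ?R (HM A h)) = det ?Q * det (HM A h)"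
    by (rule det_four_block_mat_upper_right_zero) (auto simp: HM_def)
  also have "det ?Q = det (mat 1 1 (\<lambda>_. 1)) * det (HM A h)"
    by (rule det_four_block_mat_lower_left_zero) (auto simp: HM_def)
  also have "det (mat 1 1 (\<lambda>_. 1::int)) = 1"
    by (subst det_single) auto
  finally show ?thesis unfolding D_det by simp
qed



lemma D0: "D 0 = 1" unfolding D_det HM_def by simp
lemma E0: "E 0 = 1" unfolding E_def HM_def by simp

lemma sq_both: "D n * D n = 1 \<and> E n * E n = 1"
proof (induction n rule: less_induct)
  case (less n)
  have En: "E n * E n = 1"
  proof (cases "n = 0")
    case True thus ?thesis by (simp add: E0)
  next
    case False
    show ?thesis
    proof (cases "even n")
      case True
      then obtain h where h: "n = 2*h" by blast
      hence "h < n" using False by simp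
      hence "E h * E h = 1" using less by blast
      moreover have "((-1::int)^(h*h)) * (-1)^(h*h) = 1" by (simp add: power_mult_distrib[symmetric] power_add[symmetric] flip: power_add) 
      ultimately show ?thesis unfolding h E_even by (metis (no_types, lifting) mult.assoc mult.commute mult_1)
    next
      case False
      then obtain h where h: "n = 2*h+1" by (metis oddE)
      hence "h < n" by simp
      hence "D h * D h = 1" using less by blast
      moreover have "((-1::int)^(h*h)) * (-1)^(h*h) = 1" by (simp flip: power_add) 
      ultimately show ?thesis unfolding h E_odd by (metis (no_types, lifting) mult.assoc mult.commute mult_1)
    qed
  qed
  have Dn: "D n * D n = 1"
  proof (cases "n = 0")
    case True thus ?thesis by (simp add: D0)
  next
    case False
    have c: "n - n div 2 \<le> n" by simp
    have Ec: "E (n - n div 2) * E (n - n div 2) = 1"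
    proof (cases "n - n div 2 = n")
      case True thus ?thesis using En by simp
    next
      case False thus ?thesis using less c by simp
    qed
    have "D (n div 2) * D (n div 2) = 1" using less False by simp
    thus ?thesis using Ec unfolding D_rec[of n] by (metis mult.assoc mult.commute mult_1)
  qed
  show ?case using En Dn by simp
qed

lemma Dsq: "D n * D n = 1" using sq_both by blast
lemma Esq: "E n * E n = 1" using sq_both by blast

lemma neg1_sq: "(-1::int)^(h*h) = (-1)^h"
  by (simp add: minus_one_power_iff)

lemma E_closed: "E m = (-1)^(m div 2)"
proof (cases "even m")
  case True
  then obtain h where h: "m = 2*h" by blast
  show ?thesis unfolding h E_even using Esq[of h] neg1_sq[of h] by simp
next
  case False
  then obtain h where h: "m = 2*h+1" by (metis oddE)
  show ?thesis unfolding h E_odd using Dsq[of h] neg1_sq[of h] by simp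
qed

definition s :: "nat \<Rightarrow> int" where "s x = (-1)^((x+1) div 4)"

lemma D_rec2: "D n = s n * D (n div 2)"
proof -
  have "(n - n div 2) div 2 = (n+1) div 4" by presburger
  thus ?thesis unfolding D_rec[of n] E_closed s_def by simp
qed



definition U :: "nat \<Rightarrow> int" where "U y = D y * D (y+1)"

lemma T_U: "T x = s x * s (x+2) * U (x div 2)"
proof -
  have "(x+2) div 2 = x div 2 + 1" by simp
  thus ?thesis unfolding T_def U_def using D_rec2[of x] D_rec2[of "x+2"] by simp
qed

lemma pw: "(-1::int)^a * (-1)^b = (-1)^(a+b)" by (simp add: power_add)

lemma core: assumes nn: "n + n' + 3 = 8*(t::nat)" and lo: "4*t \<le> n"
  shows "n div 2 + n' div 2 + 2 = 4*t \<and> n div 2 \<noteq> n' div 2 \<and> 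
  ((n' mod 4 = 1 \<or> n' mod 4 = 2) \<longleftrightarrow> \<not> (n mod 4 = 1 \<or> n mod 4 = 2))"
proof -
  define q where "q = n div 4"
  define r where "r = n mod 4"
  have n: "n = 4*q + r" unfolding q_def r_def by simp
  have r4: "r < 4" unfolding r_def by simp
  have qt: "t \<le> q" using lo n r4 by linarith
  have "r = 0 \<or> r = 1 \<or> r = 2 \<or> r = 3" using r4 by linarith
  thus ?thesis
  proof (elim disjE)
    assume r: "r = 0"
    define m where "m = 2*t - q - 1"
    have n': "n' = 4*m + 1" and qm: "q + m + 1 = 2*t" using nn n r unfolding m_def by linarith+
    have "n div 2 = 2*q" "n mod 4 = 0" "n' div 2 = 2*m" "n' mod 4 = 1" unfolding n n' r by (simp_all, presburger?)
    thus ?thesis using qm qt by linarith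
  next
    assume r: "r = 1"
    define m where "m = 2*t - q - 1"
    have n': "n' = 4*m" and qm: "q + m + 1 = 2*t" using nn n r unfolding m_def by linarith+
    have "n div 2 = 2*q" "n mod 4 = 1" "n' div 2 = 2*m" "n' mod 4 = 0" unfolding n n' r by (simp_all, presburger?)
    thus ?thesis using qm qt by linarith
  next
    assume r: "r = 2"
    define m where "m = 2*t - q - 2"
    have n': "n' = 4*m + 3" and qm: "q + m + 2 = 2*t" using nn n r unfolding m_def by linarith+
    have "n div 2 = 2*q+1" "n mod 4 = 2" "n' div 2 = 2*m+1" "n' mod 4 = 3" unfolding n n' r by (simp_all, presburger?)
    thus ?thesis using qm qt by linarith
  next
    assume r: "r = 3"
    define m where "m = 2*t - q - 2"
    have n': "n' = 4*m + 2" and qm: "q + m + 2 = 2*t" using nn n r unfolding m_def by linarith+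
    have "n div 2 = 2*q+1" "n mod 4 = 3" "n' div 2 = 2*m+1" "n' mod 4 = 2" unfolding n n' r by (simp_all, presburger?)
    thus ?thesis using qm qt by linarith
  qed
qed

lemma mod4_cases:
  fixes x :: nat
  obtains q where "x = 4*q" | q where "x = 4*q+1" | q where "x = 4*q+2" | q where "x = 4*q+3"
proof -
  define r where "r = x mod 4"
  have x: "x = 4*(x div 4) + r" unfolding r_def by simp
  have "r < 4" unfolding r_def by simp
  hence "r = 0 \<or> r = 1 \<or> r = 2 \<or> r = 3" by linarith
  thus ?thesis using that x by auto
qed

lemma U_even: "U (2*z) = (-1)^z"
proof -
  have e: "(2*z+1) div 4 + (2*z+1+1) div 4 = z"
  proof (cases "even z")
    case True then obtain w where "z = 2*w" by blast
    thus ?thesis by simp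
  next
    case False then obtain w where "z = 2*w+1" by (metis oddE)
    thus ?thesis by simp
  qed
  have "U (2*z) = s (2*z) * s (2*z+1) * (D z * D z)"
    unfolding U_def using D_rec2[of "2*z"] D_rec2[of "2*z+1"] by simp
  also have "\<dots> = (-1)^z" unfolding Dsq s_def pw e by simp
  finally show ?thesis .
qed

lemma U_odd: "U (2*z+1) = U z"
proof -
  have e: "(2*z+1+1) div 4 + (2*z+1+1+1) div 4 = 2 * ((z+1) div 2)"
  proof (cases "even z")
    case True then obtain w where "z = 2*w" by blast
    thus ?thesis by simp
  next
    case False then obtain w where "z = 2*w+1" by (metis oddE)
    thus ?thesis by simp
  qed
  have "U (2*z+1) = s (2*z+1) * s (2*z+1+1) * (D z * D (z+1))"
    unfolding U_def using D_rec2[of "2*z+1"] D_rec2[of "2*z+1+1"] by simp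
  also have "\<dots> = U z" unfolding U_def s_def pw e by simp
  finally show ?thesis .
qed

lemma V_val: "s x * s (x+2) = (if x mod 4 = 1 \<or> x mod 4 = 2 then -1 else 1)"
proof -
  have "s x * s (x+2) = (-1)^((x+1) div 4 + (x+2+1) div 4)" unfolding s_def pw ..
  moreover have "even ((x+1) div 4 + (x+2+1) div 4) \<longleftrightarrow> \<not> (x mod 4 = 1 \<or> x mod 4 = 2)"
  proof (cases x rule: mod4_cases)
    case (1 q)
    have "(x+1) div 4 = q" "(x+2+1) div 4 = q" "x mod 4 = 0" using 1 by presburger+
    thus ?thesis by simp
  next
    case (2 q)
    have "(x+1) div 4 = q" "(x+2+1) div 4 = q+1" "x mod 4 = 1" using 2 by presburger+
    thus ?thesis by simp
  next
    case (3 q)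
    have "(x+1) div 4 = q" "(x+2+1) div 4 = q+1" "x mod 4 = 2" using 3 by presburger+
    thus ?thesis by simp
  next
    case (4 q)
    have "(x+1) div 4 = q+1" "(x+2+1) div 4 = q+1" "x mod 4 = 3" using 4 by presburger+
    thus ?thesis by simp
  qed
  ultimately show ?thesis by (simp add: minus_one_power_iff)
qed

lemma U_anti: "y + y' + 2 = 2^(k+1) \<Longrightarrow> y \<noteq> y' \<Longrightarrow> U y = - U y'"
proof (induction k arbitrary: y y')
  case 0 thus ?case by simp
next
  case (Suc k)
  have sum: "y + y' + 2 = 4 * 2^k" using Suc.prems(1) by simp
  show ?case
  proof (cases "even y")
    case True
    then obtain z where z: "y = 2*z" by blast
    have "even (y + y' + 2)" unfolding sum by simp
    hence "even y'" using True by simp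
    then obtain z' where z': "y' = 2*z'" by blast
    have "z + z' + 1 = 2 * 2^k" using sum z z' by linarith
    hence "even (z + z' + 1)" by (metis dvd_triv_left)
    hence "odd (z + z')" by simp
    thus ?thesis unfolding z z' U_even by (auto simp: minus_one_power_iff)
  next
    case False
    then obtain z where z: "y = 2*z+1" by (metis oddE)
    have "even (y + y' + 2)" unfolding sum by simp
    hence "odd y'" using False by simp
    then obtain z' where z': "y' = 2*z'+1" by (metis oddE)
    have "z + z' + 2 = 2^(k+1)" using sum z z' by simp
    moreover have "z \<noteq> z'" using Suc.prems(2) z z' by simp
    ultimately show ?thesis unfolding z z' U_odd by (rule Suc.IH)
  qed
qed

lemma U_ones: "U (2^i * (2*n+1) - 1) = U (2*n)"
proof (induction i)
  case 0 thus ?case by simp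
next
  case (Suc i)
  define q where "q = (2::nat)^i * (2*n+1)"
  have "q > 0" unfolding q_def by simp
  moreover have "(2::nat)^(Suc i) * (2*n+1) = 2*q" unfolding q_def by simp
  ultimately have "2^(Suc i) * (2*n+1) - 1 = 2 * (2^i * (2*n+1) - 1) + 1" unfolding q_def[symmetric] by simp
  thus ?case using U_odd Suc.IH by simp
qed

lemma part2: "T (4*n) = (-1)^n"
proof -
  have "(4*n) mod 4 = 0" by simp
  hence "s (4*n) * s (4*n+2) = 1" using V_val[of "4*n"] by simp
  moreover have "4*n div 2 = 2*n" by simp
  ultimately show ?thesis using T_U[of "4*n"] U_even[of n] by simp
qed

lemma part3: "k \<ge> 2 \<Longrightarrow> T (2^(k+1)*n + 2^k - 2) = (-1)^(n+1)"
proof -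
  assume "k \<ge> 2"
  then obtain j where j: "k = j + 2" by (metis add.commute le_add_diff_inverse)
  define t where "t = (2::nat)^j"
  have t1: "t \<ge> 1" unfolding t_def by simp
  have x: "2^(k+1)*n + 2^k - 2 = 8*(t*n) + 4*t - 2" unfolding j t_def by (simp add: power_add)
  obtain u where u: "t = u + 1" using t1 by (metis le_add_diff_inverse2)
  have xx: "8*(t*n) + 4*t - 2 = 4*(2*(t*n) + u) + 2" using u by simp
  have m4: "(8*(t*n) + 4*t - 2) mod 4 = 2" unfolding xx by presburger
  have tt: "(2::nat)^(j+1) = 2*t" unfolding t_def by simp
  have d2: "(8*(t*n) + 4*t - 2) div 2 = 2^(j+1) * (2*n+1) - 1" unfolding xx tt using u
    by (simp add: algebra_simps)
  show ?thesis unfolding x T_U d2 U_ones U_even using V_val[of "8*(t*n) + 4*t - 2"] m4 by simp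
qed

lemma part1: "k \<ge> 2 \<Longrightarrow> 2^k \<le> n \<Longrightarrow> n \<le> 2^(k+1) - 3 \<Longrightarrow> T n = T (2^(k+1) - 3 - n)"
proof -
  assume k: "k \<ge> 2" and lo: "2^k \<le> n" and hi: "n \<le> 2^(k+1) - 3"
  then obtain j where j: "k = j + 2" by (metis add.commute le_add_diff_inverse)
  define t where "t = (2::nat)^j"
  have t1: "t \<ge> 1" unfolding t_def by simp
  have e1: "(2::nat)^k = 4*t" "(2::nat)^(k+1) = 8*t" "(2::nat)^(k-1) = 2*t" unfolding j t_def by (simp_all add: power_add)
  define n' where "n' = 2^(k+1) - 3 - n"
  have nn: "n + n' + 3 = 8*t" using hi t1 unfolding n'_def e1 by simp
  have lo': "4*t \<le> n" using lo e1 by simp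
  have cc: "n div 2 + n' div 2 + 2 = 4*t \<and> n div 2 \<noteq> n' div 2 \<and> 
  ((n' mod 4 = 1 \<or> n' mod 4 = 2) \<longleftrightarrow> \<not> (n mod 4 = 1 \<or> n mod 4 = 2))" by (rule core[OF nn lo'])
  have V: "s n' * s (n'+2) = - (s n * s (n+2))"
    unfolding V_val using cc by auto
  have yy: "n div 2 + n' div 2 + 2 = 2^(k-1+1)" using cc e1 k by simp
  have ne: "n div 2 \<noteq> n' div 2" using cc by simp
  have "U (n div 2) = - U (n' div 2)" by (rule U_anti[OF yy ne])
  thus ?thesis unfolding n'_def[symmetric] T_U V by simp
qed


theorem theorem2p7:
  shows "(\<forall>k n. k \<ge> 2 \<longrightarrow> 2^k \<le> n \<longrightarrow> n \<le> 2^(k+1) - 3 \<longrightarrow> T n = T (2^(k+1) - 3 - n))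
       \<and> (\<forall>n. T (4*n) = (-1)^n)
       \<and> (\<forall>n k. k \<ge> 2 \<longrightarrow> T (2^(k+1)*n + 2^k - 2) = (-1)^(n+1))"
  using part1 part2 part3 by blast

end
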